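(* Let $M=(S,\mathrm{Act},P)$ be an MDP, $T\subseteq S$, $\mathrm{rew}\colon S\to\mathbb{R}_{\ge0}$. Define $\tilde E^{\max}\colon[0,\infty]^S\to[0,\infty]^S$ by $\tilde E^{\max}(x)(s)=E^{\max}(x)(s)$ if $\Pr^{\min}_s(\Diamond T)>0$ and $\tilde E^{\max}(x)(s)=\infty$ if $\Pr^{\min}_s(\Diamond T)=0$. Then for all $s\in S$, $(\mathrm{lfp}\,\tilde E^{\max})(s)=\mathbb{E}^{\max}_s(\Diamond T)$.
   Context: An MDP is a tuple $M=(S,\mathrm{Act},P)$ with $S$ finite, $\mathrm{Act}$ finite, $P\colon S\times\mathrm{Act}\times S\to[0,1]$ with $\sum_{s'}P(s,a,s')\in\{0,1\}$; $\mathrm{Act}(s)=\{a\mid\sum_{s'}P(s,a,s')=1\}$ is nonempty for all $s$; $\mathrm{Post}(s,a)=\{s'\mid P(s,a,s')>0\}$. A strategy is $\sigma\colon S\to\mathrm{Act}$ with $\sigma(s)\in\mathrm{Act}(s)$, inducing a Markov chain with transitions $P(s,\sigma(s),\cdot)$; $\Pr^\sigma_s(\Diamond T)$ is the probability of visiting $T$ from $s$ and $\Pr^{\min}_s(\Diamond T)=\min_\sigma\Pr^\sigma_s(\Diamond T)$. For an infinite path $s_0s_1\ldots$, the accumulated reward is $\sum_{k=0}^{n-1}\mathrm{rew}(s_k)$ with $n=\min\{i\mid s_i\in T\}$ if $T$ is visited, and $\infty$ otherwise; $\mathbb{E}^\sigma_s(\Diamond T)$ is its expectation under $\sigma$ from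 $s$, and $\mathbb{E}^{\max}_s(\Diamond T)=\max_\sigma\mathbb{E}^\sigma_s(\Diamond T)$. $E^{\max}(x)(s)=0$ for $s\in T$ and $\mathrm{rew}(s)+\max_{a\in\mathrm{Act}(s)}\sum_{s'\in\mathrm{Post}(s,a)}P(s,a,s')x(s')$ for $s\notin T$, with $p\cdot\infty=\infty$ for $p>0$, $a+\infty=\infty$. The least fixed point is taken w.r.t. the pointwise order on $[0,\infty]^S$. *)

theory Defs
  imports Complex_Main "HOL-Library.Extended_Nonnegative_Real"
begin

definition Act :: "('s::finite \<Rightarrow> 'a::finite \<Rightarrow> 's \<Rightarrow> real) \<Rightarrow> 's \<Rightarrow> 'a set" where
  "Act P s = {a. (\<Sum>s'\<in>UNIV. P s a s') = 1}"

definition Post :: "('s::finite \<Rightarrow> 'a::finite \<Rightarrow> 's \<Rightarrow> real) \<Rightarrow> 's \<Rightarrow> 'a \<Rightarrow> 's set" where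
  "Post P s a = {s'. P s a s' > 0}"

definition is_mdp :: "('s::finite \<Rightarrow> 'a::finite \<Rightarrow> 's \<Rightarrow> real) \<Rightarrow> bool" where
  "is_mdp P \<longleftrightarrow> (\<forall>s a s'. 0 \<le> P s a s' \<and> P s a s' \<le> 1)
     \<and> (\<forall>s a. (\<Sum>s'\<in>UNIV. P s a s') \<in> {0, 1})
     \<and> (\<forall>s. Act P s \<noteq> {})"

definition strategies :: "('s::finite \<Rightarrow> 'a::finite \<Rightarrow> 's \<Rightarrow> real) \<Rightarrow> ('s \<Rightarrow> 'a) set" where
  "strategies P = {\<sigma>. \<forall>s. \<sigma> s \<in> Act P s}"

text \<open>Probability of the finite path s, t1, ..., tn in the Markov chain induced by \<sigma>
  (probability of the corresponding cylinder set of infinite paths).\<close>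
fun path_prob :: "('s \<Rightarrow> 'a \<Rightarrow> 's \<Rightarrow> real) \<Rightarrow> ('s \<Rightarrow> 'a) \<Rightarrow> 's \<Rightarrow> 's list \<Rightarrow> real" where
  "path_prob P \<sigma> s [] = 1"
| "path_prob P \<sigma> s (t # ts) = P s (\<sigma> s) t * path_prob P \<sigma> t ts"

definition hit_paths :: "'s set \<Rightarrow> 's \<Rightarrow> nat \<Rightarrow> 's list set" where
  "hit_paths T s n = {ts. length ts = n \<and> (s # ts) ! n \<in> T \<and> (\<forall>i<n. (s # ts) ! i \<notin> T)}"

text \<open>\<open>Pr^\<sigma>_s(\<Diamond>T)\<close>: the event of visiting T is the disjoint union of the cylinders of
  the first-hitting finite paths.\<close>
definition reach_prob :: "('s::finite \<Rightarrow> 'a::finite \<Rightarrow> 's \<Rightarrow> real) \<Rightarrow> ('s \<Rightarrow> 'a) \<Rightarrow> 's set \<Rightarrow> 's \<Rightarrow> ennreal" where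
  "reach_prob P \<sigma> T s = (\<Sum>n. \<Sum>ts\<in>hit_paths T s n. ennreal (path_prob P \<sigma> s ts))"

definition min_reach_prob :: "('s::finite \<Rightarrow> 'a::finite \<Rightarrow> 's \<Rightarrow> real) \<Rightarrow> 's set \<Rightarrow> 's \<Rightarrow> ennreal" where
  "min_reach_prob P T s = Min ((\<lambda>\<sigma>. reach_prob P \<sigma> T s) ` strategies P)"

text \<open>\<open>\<EE>^\<sigma>_s(\<Diamond>T)\<close>: the accumulated reward is constant (= sum of rewards before the
  first visit of T) on each first-hitting cylinder, and \<infinity> on the paths never visiting T,
  which have probability 1 - Pr^\<sigma>_s(\<Diamond>T).\<close>
definition exp_rew :: "('s::finite \<Rightarrow> 'a::finite \<Rightarrow> 's \<Rightarrow> real) \<Rightarrow> ('s \<Rightarrow> real) \<Rightarrow> ('s \<Rightarrow> 'a) \<Rightarrow> 's set \<Rightarrow> 's \<Rightarrow> ennreal" where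
  "exp_rew P rew \<sigma> T s =
     (\<Sum>n. \<Sum>ts\<in>hit_paths T s n.
        ennreal (path_prob P \<sigma> s ts) * ennreal (\<Sum>k<n. rew ((s # ts) ! k)))
     + top * (1 - reach_prob P \<sigma> T s)"

definition max_exp_rew :: "('s::finite \<Rightarrow> 'a::finite \<Rightarrow> 's \<Rightarrow> real) \<Rightarrow> ('s \<Rightarrow> real) \<Rightarrow> 's set \<Rightarrow> 's \<Rightarrow> ennreal" where
  "max_exp_rew P rew T s = Max ((\<lambda>\<sigma>. exp_rew P rew \<sigma> T s) ` strategies P)"

definition Emax_op :: "('s::finite \<Rightarrow> 'a::finite \<Rightarrow> 's \<Rightarrow> real) \<Rightarrow> ('s \<Rightarrow> real) \<Rightarrow> 's set \<Rightarrow> ('s \<Rightarrow> ennreal) \<Rightarrow> 's \<Rightarrow> ennreal" where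
  "Emax_op P rew T x s =
     (if s \<in> T then 0
      else ennreal (rew s) + Max ((\<lambda>a. \<Sum>s'\<in>Post P s a. ennreal (P s a s') * x s') ` Act P s))"

definition Emax_tilde_op :: "('s::finite \<Rightarrow> 'a::finite \<Rightarrow> 's \<Rightarrow> real) \<Rightarrow> ('s \<Rightarrow> real) \<Rightarrow> 's set \<Rightarrow> ('s \<Rightarrow> ennreal) \<Rightarrow> 's \<Rightarrow> ennreal" where
  "Emax_tilde_op P rew T x s =
     (if min_reach_prob P T s > 0 then Emax_op P rew T x s else top)"

end

theory Submission
  imports Defs
begin

definition hitp :: "('s::finite \<Rightarrow> 'a::finite \<Rightarrow> 's \<Rightarrow> real) \<Rightarrow> 's set \<Rightarrow> ('s \<Rightarrow> 'a) \<Rightarrow> nat \<Rightarrow> 's \<Rightarrow> real" where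
  "hitp P T \<sigma> n s = (\<Sum>ts\<in>hit_paths T s n. path_prob P \<sigma> s ts)"

definition hitr :: "('s::finite \<Rightarrow> 'a::finite \<Rightarrow> 's \<Rightarrow> real) \<Rightarrow> ('s \<Rightarrow> real) \<Rightarrow> 's set \<Rightarrow> ('s \<Rightarrow> 'a) \<Rightarrow> nat \<Rightarrow> 's \<Rightarrow> real" where
  "hitr P rew T \<sigma> n s = (\<Sum>ts\<in>hit_paths T s n. path_prob P \<sigma> s ts * (\<Sum>k<n. rew ((s # ts) ! k)))"

lemma finite_hit: "finite (hit_paths T (s::'s::finite) n)"
proof -
  have "hit_paths T s n \<subseteq> {xs. set xs \<subseteq> UNIV \<and> length xs = n}" by (auto simp: hit_paths_def)
  moreover have "finite {xs. set xs \<subseteq> (UNIV::'s set) \<and> length xs = n}"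
    by (rule finite_lists_length_eq) simp
  ultimately show ?thesis by (rule finite_subset)
qed

lemma hit0: "hit_paths T s 0 = (if s \<in> T then {[]} else {})"
  by (auto simp: hit_paths_def)

lemma hitSuc_T: "s \<in> T \<Longrightarrow> hit_paths T s (Suc n) = {}"
  by (auto simp: hit_paths_def)

lemma hitSuc: "s \<notin> T \<Longrightarrow> hit_paths T s (Suc n) = (\<lambda>(u,ts). u # ts) ` (SIGMA u:UNIV. hit_paths T u n)"
proof (intro set_eqI iffI)
  fix xs assume s: "s \<notin> T" and xs: "xs \<in> hit_paths T s (Suc n)"
  then obtain u ts where xs_eq: "xs = u # ts" by (cases xs) (auto simp: hit_paths_def)
  have "ts \<in> hit_paths T u n"
    unfolding hit_paths_def
  proof (intro CollectI conjI allI impI)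
    show "length ts = n" using xs xs_eq by (auto simp: hit_paths_def)
    show "(u # ts) ! n \<in> T" using xs xs_eq by (auto simp: hit_paths_def)
    fix i assume "i < n"
    then have "Suc i < Suc n" by simp
    then have "(s # u # ts) ! Suc i \<notin> T" using xs xs_eq unfolding hit_paths_def by blast
    then show "(u # ts) ! i \<notin> T" by simp
  qed
  then show "xs \<in> (\<lambda>(u,ts). u # ts) ` (SIGMA u:UNIV. hit_paths T u n)" using xs_eq by force
next
  fix xs assume s: "s \<notin> T" and xs: "xs \<in> (\<lambda>(u,ts). u # ts) ` (SIGMA u:UNIV. hit_paths T u n)"
  then obtain u ts where xs_eq: "xs = u # ts" and h: "ts \<in> hit_paths T u n" by auto
  show "xs \<in> hit_paths T s (Suc n)"
    unfolding hit_paths_def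
  proof (intro CollectI conjI allI impI)
    show "length xs = Suc n" using h xs_eq by (auto simp: hit_paths_def)
    show "(s # xs) ! Suc n \<in> T" using h xs_eq by (auto simp: hit_paths_def)
    fix i assume i: "i < Suc n"
    show "(s # xs) ! i \<notin> T"
    proof (cases i)
      case 0 then show ?thesis using s by simp
    next
      case (Suc j) then show ?thesis using h xs_eq i by (auto simp: hit_paths_def)
    qed
  qed
qed

lemma sum_hitSuc:
  assumes "s \<notin> T"
  shows "(\<Sum>xs\<in>hit_paths T (s::'s::finite) (Suc n). f xs) = (\<Sum>u\<in>UNIV. \<Sum>ts\<in>hit_paths T u n. f (u # ts))"
proof -
  have inj: "inj_on (\<lambda>(u,ts). u # ts) (SIGMA u:UNIV. hit_paths T u n)"
    by (auto simp: inj_on_def)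
  have "(\<Sum>xs\<in>hit_paths T s (Suc n). f xs) = (\<Sum>p\<in>(SIGMA u:UNIV. hit_paths T u n). f ((\<lambda>(u,ts). u # ts) p))"
    unfolding hitSuc[OF assms] by (rule sum.reindex[OF inj, unfolded comp_def])
  also have "\<dots> = (\<Sum>u\<in>UNIV. \<Sum>ts\<in>hit_paths T u n. f (u # ts))"
    by (subst sum.Sigma) (auto simp: finite_hit split_def)
  finally show ?thesis .
qed

lemma hitp_0: "hitp P T \<sigma> 0 s = (if s \<in> T then 1 else 0)"
  by (simp add: hitp_def hit0)

lemma hitp_Suc: "hitp P T \<sigma> (Suc n) s = (if s \<in> T then 0 else (\<Sum>u\<in>UNIV. P s (\<sigma> s) u * hitp P T \<sigma> n u))"
  by (simp add: hitp_def hitSuc_T sum_hitSuc sum_distrib_left)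

lemma hitr_0: "hitr P rew T \<sigma> 0 s = 0"
  by (simp add: hitr_def)

lemma rsum_Cons: "(\<Sum>k<Suc n. rew ((s # u # ts) ! k)) = rew s + (\<Sum>k<n. rew ((u # ts) ! k))"
  by (subst sum.lessThan_Suc_shift) simp

lemma hitr_Suc: "hitr P rew T \<sigma> (Suc n) s = (if s \<in> T then 0 else
   (\<Sum>u\<in>UNIV. P s (\<sigma> s) u * (rew s * hitp P T \<sigma> n u + hitr P rew T \<sigma> n u)))"
proof (cases "s \<in> T")
  case True then show ?thesis by (simp add: hitr_def hitSuc_T)
next
  case False
  show ?thesis using False
    unfolding hitr_def hitp_def sum_hitSuc[OF False] rsum_Cons
    by (simp add: sum_distrib_left sum_distrib_right algebra_simps sum.distrib)
qed


fun avoid :: "('s::finite \<Rightarrow> 'a::finite \<Rightarrow> 's \<Rightarrow> real) \<Rightarrow> 's set \<Rightarrow> ('s \<Rightarrow> 'a) \<Rightarrow> nat \<Rightarrow> 's \<Rightarrow> real" where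
  "avoid P T \<sigma> 0 s = 1"
| "avoid P T \<sigma> (Suc n) s = (if s \<in> T then 0 else (\<Sum>u\<in>UNIV. P s (\<sigma> s) u * avoid P T \<sigma> n u))"

fun gval :: "('s::finite \<Rightarrow> 'a::finite \<Rightarrow> 's \<Rightarrow> real) \<Rightarrow> ('s \<Rightarrow> real) \<Rightarrow> 's set \<Rightarrow> ('s \<Rightarrow> 'a) \<Rightarrow> nat \<Rightarrow> 's \<Rightarrow> real" where
  "gval P rew T \<sigma> 0 s = 0"
| "gval P rew T \<sigma> (Suc n) s = (if s \<in> T then 0 else rew s + (\<Sum>u\<in>UNIV. P s (\<sigma> s) u * gval P rew T \<sigma> n u))"

definition rp :: "('s::finite \<Rightarrow> 'a::finite \<Rightarrow> 's \<Rightarrow> real) \<Rightarrow> 's set \<Rightarrow> ('s \<Rightarrow> 'a) \<Rightarrow> 's \<Rightarrow> real" where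
  "rp P T \<sigma> s = (\<Sum>n. hitp P T \<sigma> n s)"

lemma P_nonneg: "is_mdp P \<Longrightarrow> 0 \<le> P s a u"
  by (simp add: is_mdp_def)

lemma P_sum1: "\<sigma> \<in> strategies P \<Longrightarrow> (\<Sum>u\<in>UNIV. P s (\<sigma> s) u) = 1"
  by (simp add: strategies_def Act_def)

lemma Act_sum1: "a \<in> Act P s \<Longrightarrow> (\<Sum>u\<in>UNIV. P s a u) = 1"
  by (simp add: Act_def)

lemma pp_nonneg: "is_mdp P \<Longrightarrow> 0 \<le> path_prob P \<sigma> s ts"
  by (induction ts arbitrary: s) (auto simp: P_nonneg)

lemma hitp_nonneg: "is_mdp P \<Longrightarrow> 0 \<le> hitp P T \<sigma> n s"
  unfolding hitp_def by (rule sum_nonneg) (simp add: pp_nonneg)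

lemma hitr_nonneg: "is_mdp P \<Longrightarrow> \<forall>s. 0 \<le> rew s \<Longrightarrow> 0 \<le> hitr P rew T \<sigma> n s"
  unfolding hitr_def by (intro sum_nonneg mult_nonneg_nonneg) (auto simp: pp_nonneg)

lemma avoid_nonneg: "is_mdp P \<Longrightarrow> 0 \<le> avoid P T \<sigma> n s"
  by (induction n arbitrary: s) (auto intro!: sum_nonneg simp: P_nonneg)

lemma gval_nonneg: "is_mdp P \<Longrightarrow> \<forall>s. 0 \<le> rew s \<Longrightarrow> 0 \<le> gval P rew T \<sigma> n s"
  by (induction n arbitrary: s) (auto intro!: sum_nonneg add_nonneg_nonneg simp: P_nonneg)

lemma hitp_avoid:
  assumes "\<sigma> \<in> strategies P"
  shows "(\<Sum>k<n. hitp P T \<sigma> k s) + avoid P T \<sigma> n s = 1"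
proof (induction n arbitrary: s)
  case 0 then show ?case by simp
next
  case (Suc n)
  show ?case
  proof (cases "s \<in> T")
    case True
    then show ?thesis by (simp add: sum.lessThan_Suc_shift hitp_0 hitp_Suc del: sum.lessThan_Suc)
  next
    case False
    have "(\<Sum>k<Suc n. hitp P T \<sigma> k s) + avoid P T \<sigma> (Suc n) s
        = (\<Sum>k<n. \<Sum>u\<in>UNIV. P s (\<sigma> s) u * hitp P T \<sigma> k u) + (\<Sum>u\<in>UNIV. P s (\<sigma> s) u * avoid P T \<sigma> n u)"
      using False by (simp add: sum.lessThan_Suc_shift hitp_0 hitp_Suc del: sum.lessThan_Suc)
    also have "\<dots> = (\<Sum>u\<in>UNIV. P s (\<sigma> s) u * ((\<Sum>k<n. hitp P T \<sigma> k u) + avoid P T \<sigma> n u))"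
      by (simp add: sum_distrib_left sum.distrib algebra_simps sum.swap[of _ "{..<n}"])
    also have "\<dots> = 1" using Suc.IH P_sum1[OF assms] by simp
    finally show ?thesis .
  qed
qed

lemma psum_hitp_le1:
  assumes "is_mdp P" "\<sigma> \<in> strategies P"
  shows "(\<Sum>k<n. hitp P T \<sigma> k s) \<le> 1"
  using hitp_avoid[OF assms(2), where n=n and T=T and s=s] avoid_nonneg[OF assms(1)] by (metis le_add_same_cancel1)

lemma avoid_le1:
  assumes "is_mdp P" "\<sigma> \<in> strategies P"
  shows "avoid P T \<sigma> n s \<le> 1"
  using hitp_avoid[OF assms(2), where n=n and T=T and s=s] sum_nonneg[of "{..<n}" "\<lambda>k. hitp P T \<sigma> k s"] hitp_nonneg[OF assms(1)]
  by force

lemma summable_hitp: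
  assumes "is_mdp P" "\<sigma> \<in> strategies P"
  shows "summable (\<lambda>n. hitp P T \<sigma> n s)"
  using psum_hitp_le1[OF assms] hitp_nonneg[OF assms(1)]
  by (intro summableI_nonneg_bounded) auto

lemma rp_ge_psum:
  assumes "is_mdp P" "\<sigma> \<in> strategies P"
  shows "(\<Sum>k<n. hitp P T \<sigma> k s) \<le> rp P T \<sigma> s"
  unfolding rp_def using summable_hitp[OF assms] hitp_nonneg[OF assms(1)]
  by (intro sum_le_suminf) auto

lemma rp_le1:
  assumes "is_mdp P" "\<sigma> \<in> strategies P"
  shows "rp P T \<sigma> s \<le> 1"
  unfolding rp_def using summable_hitp[OF assms] psum_hitp_le1[OF assms]
  by (intro suminf_le_const) auto

lemma rp_nonneg:
  assumes "is_mdp P" "\<sigma> \<in> strategies P"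
  shows "0 \<le> rp P T \<sigma> s"
  unfolding rp_def using summable_hitp[OF assms] hitp_nonneg[OF assms(1)]
  by (intro suminf_nonneg) auto

lemma one_minus_rp_le_avoid:
  assumes "is_mdp P" "\<sigma> \<in> strategies P"
  shows "1 - rp P T \<sigma> s \<le> avoid P T \<sigma> n s"
  using hitp_avoid[OF assms(2), where n=n and T=T and s=s] rp_ge_psum[OF assms, where n=n and T=T and s=s] by linarith

lemma avoid_tendsto:
  assumes "is_mdp P" "\<sigma> \<in> strategies P"
  shows "(\<lambda>n. avoid P T \<sigma> n s) \<longlonglongrightarrow> 1 - rp P T \<sigma> s"
proof -
  have "(\<lambda>n. \<Sum>k<n. hitp P T \<sigma> k s) \<longlonglongrightarrow> rp P T \<sigma> s"
    unfolding rp_def using summable_hitp[OF assms] by (rule summable_LIMSEQ)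
  then have "(\<lambda>n. 1 - (\<Sum>k<n. hitp P T \<sigma> k s)) \<longlonglongrightarrow> 1 - rp P T \<sigma> s"
    by (intro tendsto_intros)
  moreover have "(\<lambda>n. 1 - (\<Sum>k<n. hitp P T \<sigma> k s)) = (\<lambda>n. avoid P T \<sigma> n s)"
    using hitp_avoid[OF assms(2)] by (auto simp: algebra_simps eq_diff_eq)
  ultimately show ?thesis by simp
qed

lemma avoid_Suc_le:
  assumes "is_mdp P" "\<sigma> \<in> strategies P"
  shows "avoid P T \<sigma> (Suc n) s \<le> avoid P T \<sigma> n s"
  using hitp_avoid[OF assms(2), where n=n and T=T and s=s] hitp_avoid[OF assms(2), where n="Suc n" and T=T and s=s] hitp_nonneg[OF assms(1), of T \<sigma> n s]
  by simp

lemma avoid_mono: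
  assumes "is_mdp P" "\<sigma> \<in> strategies P" "n \<le> m"
  shows "avoid P T \<sigma> m s \<le> avoid P T \<sigma> n s"
  using assms(3)
proof (induction m)
  case 0 then show ?case by simp
next
  case (Suc m)
  then show ?case using avoid_Suc_le[OF assms(1,2), of T m s] by (cases "n = Suc m") auto
qed

lemma rp_T: 
  assumes "is_mdp P" "\<sigma> \<in> strategies P" "s \<in> T"
  shows "rp P T \<sigma> s = 1"
proof -
  have "(\<lambda>n. hitp P T \<sigma> n s) = (\<lambda>n. if n = 0 then 1 else 0)"
  proof
    fix n show "hitp P T \<sigma> n s = (if n = 0 then 1 else 0)"
      using assms(3) by (cases n) (auto simp: hitp_0 hitp_Suc)
  qed
  moreover have "(\<Sum>n. (if n = 0 then 1 else 0::real)) = 1"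
    using sums_single[of 0 "\<lambda>_. 1::real"] by (simp add: sums_iff)
  ultimately show ?thesis unfolding rp_def by simp
qed

lemma rp_notT:
  assumes "is_mdp P" "\<sigma> \<in> strategies P" "s \<notin> T"
  shows "rp P T \<sigma> s = (\<Sum>u\<in>UNIV. P s (\<sigma> s) u * rp P T \<sigma> u)"
proof -
  have "rp P T \<sigma> s = (\<Sum>n. hitp P T \<sigma> (Suc n) s)"
    unfolding rp_def using suminf_split_head[OF summable_hitp[OF assms(1,2)], of T s] assms(3)
    by (simp add: hitp_0)
  also have "\<dots> = (\<Sum>n. \<Sum>u\<in>UNIV. P s (\<sigma> s) u * hitp P T \<sigma> n u)"
    using assms(3) by (simp add: hitp_Suc)
  also have "\<dots> = (\<Sum>u\<in>UNIV. \<Sum>n. P s (\<sigma> s) u * hitp P T \<sigma> n u)"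
    by (rule suminf_sum) (intro summable_mult summable_hitp[OF assms(1,2)])
  also have "\<dots> = (\<Sum>u\<in>UNIV. P s (\<sigma> s) u * rp P T \<sigma> u)"
    unfolding rp_def by (intro sum.cong refl suminf_mult summable_hitp[OF assms(1,2)])
  finally show ?thesis .
qed


lemma avoid_submult:
  assumes mdp: "is_mdp P"
    and closed: "\<forall>t\<in>U. t \<notin> T \<longrightarrow> (\<forall>u. 0 < P t (\<sigma> t) u \<longrightarrow> u \<in> U)"
    and c: "\<forall>t\<in>U. avoid P T \<sigma> m t \<le> c" "0 \<le> c"
  shows "s \<in> U \<Longrightarrow> avoid P T \<sigma> (m + n) s \<le> c * avoid P T \<sigma> n s"
proof (induction n arbitrary: s)
  case 0 then show ?case using c by simp
next
  case (Suc n)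
  show ?case
  proof (cases "s \<in> T")
    case True then show ?thesis by simp
  next
    case False
    have "avoid P T \<sigma> (m + Suc n) s = (\<Sum>u\<in>UNIV. P s (\<sigma> s) u * avoid P T \<sigma> (m + n) u)"
      using False by simp
    also have "\<dots> \<le> (\<Sum>u\<in>UNIV. P s (\<sigma> s) u * (c * avoid P T \<sigma> n u))"
    proof (rule sum_mono)
      fix u
      show "P s (\<sigma> s) u * avoid P T \<sigma> (m + n) u \<le> P s (\<sigma> s) u * (c * avoid P T \<sigma> n u)"
      proof (cases "0 < P s (\<sigma> s) u")
        case True
        then have "u \<in> U" using closed Suc.prems False by blast
        then show ?thesis using Suc.IH True by (simp add: mult_left_mono)
      next
        case False
        then have "P s (\<sigma> s) u = 0" using P_nonneg[OF mdp, of s "\<sigma> s" u] by linarith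
        then show ?thesis by simp
      qed
    qed
    also have "\<dots> = c * avoid P T \<sigma> (Suc n) s"
      using False by (simp add: sum_distrib_left algebra_simps)
    finally show ?thesis .
  qed
qed

lemma reach_one:
  assumes mdp: "is_mdp P" and st: "\<sigma> \<in> strategies P"
    and closed: "\<forall>t\<in>U. t \<notin> T \<longrightarrow> (\<forall>u. 0 < P t (\<sigma> t) u \<longrightarrow> u \<in> U)"
    and pos: "\<forall>t\<in>U. 0 < rp P T \<sigma> t"
  shows "\<forall>t\<in>U. rp P T \<sigma> t = 1"
proof -
  have ex: "\<exists>k. avoid P T \<sigma> k t < 1" if t: "t \<in> U" for t
  proof -
    have "\<exists>k. hitp P T \<sigma> k t \<noteq> 0"
    proof (rule ccontr)
      assume "\<not> ?thesis"
      then have "rp P T \<sigma> t = 0" by (simp add: rp_def)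
      then show False using pos t by (metis less_irrefl)
    qed
    then obtain k where k: "0 < hitp P T \<sigma> k t" using hitp_nonneg[OF mdp, of T \<sigma> _ t]
      by (metis order_le_less)
    have "(\<Sum>j<Suc k. hitp P T \<sigma> j t) + avoid P T \<sigma> (Suc k) t = 1" by (rule hitp_avoid[OF st])
    moreover have "0 \<le> (\<Sum>j<k. hitp P T \<sigma> j t)" by (intro sum_nonneg hitp_nonneg[OF mdp])
    ultimately have "avoid P T \<sigma> (Suc k) t < 1" using k by simp
    then show ?thesis by blast
  qed
  have "\<forall>t\<in>U. \<forall>\<^sub>F n in sequentially. avoid P T \<sigma> n t < 1"
  proof
    fix t assume "t \<in> U"
    then obtain k where k: "avoid P T \<sigma> k t < 1" using ex by blast
    show "\<forall>\<^sub>F n in sequentially. avoid P T \<sigma> n t < 1"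
      unfolding eventually_sequentially
      using k avoid_mono[OF mdp st] by (blast intro: le_less_trans)
  qed
  then have "\<forall>\<^sub>F n in sequentially. \<forall>t\<in>U. avoid P T \<sigma> n t < 1"
    by (intro eventually_ball_finite) auto
  then obtain m where m: "\<forall>t\<in>U. avoid P T \<sigma> m t < 1"
    unfolding eventually_sequentially by blast
  define c where "c = Max (insert 0 ((\<lambda>t. avoid P T \<sigma> m t) ` U))"
  have c0: "0 \<le> c" unfolding c_def by simp
  have c1: "c < 1" unfolding c_def using m by simp
  have cU: "\<forall>t\<in>U. avoid P T \<sigma> m t \<le> c" unfolding c_def by simp
  have pow: "avoid P T \<sigma> (k * m) s \<le> c ^ k" if "s \<in> U" for k s
    using that
  proof (induction k arbitrary: s)
    case 0 then show ?case by simp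
  next
    case (Suc k)
    have "avoid P T \<sigma> (Suc k * m) s = avoid P T \<sigma> (m + k * m) s" by simp
    also have "\<dots> \<le> c * avoid P T \<sigma> (k * m) s"
      by (rule avoid_submult[OF mdp closed cU c0 Suc.prems])
    also have "\<dots> \<le> c * c ^ k" using Suc c0 by (simp add: mult_left_mono)
    finally show ?case by simp
  qed
  show ?thesis
  proof
    fix t assume t: "t \<in> U"
    have "rp P T \<sigma> t \<ge> 1"
    proof (rule ccontr)
      assume "\<not> ?thesis"
      then have "0 < 1 - rp P T \<sigma> t" by simp
      then obtain k where "c ^ k < 1 - rp P T \<sigma> t" using real_arch_pow_inv c1 by blast
      moreover have "1 - rp P T \<sigma> t \<le> avoid P T \<sigma> (k * m) t" by (rule one_minus_rp_le_avoid[OF mdp st])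
      ultimately show False using pow[OF t, of k] by linarith
    qed
    then show "rp P T \<sigma> t = 1" using rp_le1[OF mdp st, of T t] by linarith
  qed
qed

lemma reach_zero:
  assumes disj: "U \<inter> T = {}"
    and closed: "\<forall>t\<in>U. \<forall>u. P t (\<sigma> t) u \<noteq> 0 \<longrightarrow> u \<in> U"
  shows "\<forall>t\<in>U. rp P T \<sigma> t = 0"
proof -
  have "\<forall>t\<in>U. hitp P T \<sigma> n t = 0" for n
  proof (induction n)
    case 0 then show ?case using disj by (auto simp: hitp_0)
  next
    case (Suc n)
    show ?case
    proof
      fix t assume t: "t \<in> U"
      have "(\<Sum>u\<in>UNIV. P t (\<sigma> t) u * hitp P T \<sigma> n u) = 0"
        by (rule sum.neutral) (use Suc closed t in auto)
      then show "hitp P T \<sigma> (Suc n) t = 0" by (simp add: hitp_Suc)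
    qed
  qed
  then show ?thesis by (simp add: rp_def)
qed

lemma reach_lt1:
  assumes mdp: "is_mdp P" and st: "\<sigma> \<in> strategies P" and s: "s \<notin> T"
    and u: "0 < P s (\<sigma> s) u" "rp P T \<sigma> u < 1"
  shows "rp P T \<sigma> s < 1"
proof -
  have "rp P T \<sigma> s = (\<Sum>v\<in>UNIV. P s (\<sigma> s) v * rp P T \<sigma> v)" by (rule rp_notT[OF mdp st s])
  also have "\<dots> < (\<Sum>v\<in>UNIV. P s (\<sigma> s) v * 1)"
  proof (rule sum_strict_mono_ex1)
    show "\<forall>v\<in>UNIV. P s (\<sigma> s) v * rp P T \<sigma> v \<le> P s (\<sigma> s) v * 1"
      using mult_left_mono[OF rp_le1[OF mdp st] P_nonneg[OF mdp]] by simp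
    show "\<exists>a\<in>UNIV. P s (\<sigma> s) a * rp P T \<sigma> a < P s (\<sigma> s) a * 1"
    proof
      show "P s (\<sigma> s) u * rp P T \<sigma> u < P s (\<sigma> s) u * 1"
        using u by (intro mult_strict_left_mono) auto
    qed simp
  qed (rule finite_UNIV)
  also have "\<dots> = 1" using P_sum1[OF st] by simp
  finally show ?thesis .
qed


lemma reach_eq:
  assumes mdp: "is_mdp P" and st: "\<sigma> \<in> strategies P"
  shows "reach_prob P \<sigma> T s = ennreal (rp P T \<sigma> s)"
proof -
  have "reach_prob P \<sigma> T s = (\<Sum>n. ennreal (hitp P T \<sigma> n s))"
    unfolding reach_prob_def hitp_def by (subst sum_ennreal) (auto simp: pp_nonneg[OF mdp])
  also have "\<dots> = ennreal (rp P T \<sigma> s)"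
    unfolding rp_def by (rule suminf_ennreal2) (auto simp: hitp_nonneg[OF mdp] summable_hitp[OF mdp st])
  finally show ?thesis .
qed

lemma exp_eq:
  assumes mdp: "is_mdp P" and st: "\<sigma> \<in> strategies P" and rew: "\<forall>s. 0 \<le> rew s"
  shows "exp_rew P rew \<sigma> T s = (\<Sum>n. ennreal (hitr P rew T \<sigma> n s)) + top * (1 - ennreal (rp P T \<sigma> s))"
proof -
  have "(\<Sum>ts\<in>hit_paths T s n. ennreal (path_prob P \<sigma> s ts) * ennreal (\<Sum>k<n. rew ((s # ts) ! k)))
      = ennreal (hitr P rew T \<sigma> n s)" for n
  proof -
    have "ennreal (hitr P rew T \<sigma> n s) = (\<Sum>ts\<in>hit_paths T s n. ennreal (path_prob P \<sigma> s ts * (\<Sum>k<n. rew ((s # ts) ! k))))"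
      unfolding hitr_def by (rule sum_ennreal[symmetric]) (auto intro!: mult_nonneg_nonneg sum_nonneg simp: pp_nonneg[OF mdp] rew)
    also have "\<dots> = (\<Sum>ts\<in>hit_paths T s n. ennreal (path_prob P \<sigma> s ts) * ennreal (\<Sum>k<n. rew ((s # ts) ! k)))"
      by (intro sum.cong refl ennreal_mult) (auto intro!: sum_nonneg simp: pp_nonneg[OF mdp] rew)
    finally show ?thesis by simp
  qed
  then show ?thesis unfolding exp_rew_def reach_eq[OF mdp st] by simp
qed

lemma exp_top:
  assumes mdp: "is_mdp P" and st: "\<sigma> \<in> strategies P" and rew: "\<forall>s. 0 \<le> rew s"
    and lt: "rp P T \<sigma> s < 1"
  shows "exp_rew P rew \<sigma> T s = top"
proof -
  have "1 - ennreal (rp P T \<sigma> s) = ennreal (1 - rp P T \<sigma> s)"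
    using rp_nonneg[OF mdp st] by (metis ennreal_1 ennreal_minus)
  moreover have "ennreal (1 - rp P T \<sigma> s) \<noteq> 0" using lt by simp
  ultimately show ?thesis unfolding exp_eq[OF mdp st rew] by (simp add: ennreal_top_mult)
qed

lemma exp_H:
  assumes mdp: "is_mdp P" and st: "\<sigma> \<in> strategies P" and rew: "\<forall>s. 0 \<le> rew s"
    and eq: "rp P T \<sigma> s = 1"
  shows "exp_rew P rew \<sigma> T s = (\<Sum>n. ennreal (hitr P rew T \<sigma> n s))"
  unfolding exp_eq[OF mdp st rew] eq by simp

lemma finite_strategies: "finite (strategies (P::'s::finite \<Rightarrow> 'a::finite \<Rightarrow> 's \<Rightarrow> real))"
  by (rule finite_subset[of _ UNIV]) auto

lemma strategies_ne: "is_mdp P \<Longrightarrow> (\<lambda>s. SOME a. a \<in> Act P s) \<in> strategies P"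
  unfolding strategies_def is_mdp_def by (auto simp: some_in_eq)

lemma min_pos:
  assumes mdp: "is_mdp P"
  shows "0 < min_reach_prob P T s \<longleftrightarrow> (\<forall>\<sigma>\<in>strategies P. 0 < rp P T \<sigma> s)"
proof -
  have ne: "(\<lambda>\<sigma>. reach_prob P \<sigma> T s) ` strategies P \<noteq> {}" using strategies_ne[OF mdp] by blast
  have "0 < min_reach_prob P T s \<longleftrightarrow> (\<forall>\<sigma>\<in>strategies P. 0 < reach_prob P \<sigma> T s)"
    unfolding min_reach_prob_def using ne finite_strategies by (subst Min_gr_iff) auto
  also have "\<dots> \<longleftrightarrow> (\<forall>\<sigma>\<in>strategies P. 0 < rp P T \<sigma> s)"
    using reach_eq[OF mdp] by (simp add: ennreal_less_zero_iff)
  finally show ?thesis .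
qed

lemma Post_sum:
  assumes mdp: "is_mdp P"
  shows "(\<Sum>u\<in>Post P s a. ennreal (P s a u) * x u) = (\<Sum>u\<in>UNIV. ennreal (P s a u) * x u)"
proof (rule sum.mono_neutral_left)
  show "\<forall>i\<in>UNIV - Post P s a. ennreal (P s a i) * x i = 0"
    using P_nonneg[OF mdp] by (auto simp: Post_def ennreal_eq_0_iff)
qed auto

lemma Emax_ge:
  assumes mdp: "is_mdp P" and t: "t \<notin> T" and a: "a \<in> Act P t"
  shows "ennreal (rew t) + (\<Sum>u\<in>UNIV. ennreal (P t a u) * x u) \<le> Emax_op P rew T x t"
proof -
  have "(\<Sum>u\<in>Post P t a. ennreal (P t a u) * x u)
      \<le> Max ((\<lambda>a. \<Sum>s'\<in>Post P t a. ennreal (P t a s') * x s') ` Act P t)"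
    using a by (intro Max_ge) auto
  then show ?thesis unfolding Emax_op_def Post_sum[OF mdp] using t by (simp add: add_left_mono)
qed

lemma ennreal_step:
  assumes mdp: "is_mdp P" and "0 \<le> r" and "\<forall>u. 0 \<le> g u"
  shows "ennreal (r + (\<Sum>u\<in>UNIV. P t a u * g u)) = ennreal r + (\<Sum>u\<in>UNIV. ennreal (P t a u) * ennreal (g u))"
proof -
  have "ennreal (\<Sum>u\<in>UNIV. P t a u * g u) = (\<Sum>u\<in>UNIV. ennreal (P t a u) * ennreal (g u))"
  proof -
    have "ennreal (\<Sum>u\<in>UNIV. P t a u * g u) = (\<Sum>u\<in>UNIV. ennreal (P t a u * g u))"
      using assms P_nonneg[OF mdp] by (intro sum_ennreal[symmetric]) auto
    also have "\<dots> = (\<Sum>u\<in>UNIV. ennreal (P t a u) * ennreal (g u))"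
      using assms P_nonneg[OF mdp] by (intro sum.cong refl ennreal_mult) auto
    finally show ?thesis .
  qed
  moreover have "0 \<le> (\<Sum>u\<in>UNIV. P t a u * g u)"
    using assms P_nonneg[OF mdp] by (auto intro!: sum_nonneg)
  ultimately show ?thesis using assms by (simp add: ennreal_plus)
qed

lemma psum_hitr_le_gval:
  assumes mdp: "is_mdp P" and st: "\<sigma> \<in> strategies P" and rew: "\<forall>s. 0 \<le> rew s"
  shows "(\<Sum>k<n. hitr P rew T \<sigma> k s) \<le> gval P rew T \<sigma> n s"
proof (induction n arbitrary: s)
  case 0 then show ?case by simp
next
  case (Suc n)
  show ?case
  proof (cases "s \<in> T")
    case True
    then show ?thesis by (simp add: sum.lessThan_Suc_shift hitr_0 hitr_Suc del: sum.lessThan_Suc)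
  next
    case False
    have "(\<Sum>k<Suc n. hitr P rew T \<sigma> k s)
        = (\<Sum>k<n. \<Sum>u\<in>UNIV. P s (\<sigma> s) u * (rew s * hitp P T \<sigma> k u + hitr P rew T \<sigma> k u))"
      using False by (simp add: sum.lessThan_Suc_shift hitr_0 hitr_Suc del: sum.lessThan_Suc)
    also have "\<dots> = (\<Sum>u\<in>UNIV. P s (\<sigma> s) u * (rew s * (\<Sum>k<n. hitp P T \<sigma> k u) + (\<Sum>k<n. hitr P rew T \<sigma> k u)))"
      by (simp add: sum_distrib_left sum.distrib algebra_simps sum.swap[of _ "{..<n}"])
    also have "\<dots> \<le> (\<Sum>u\<in>UNIV. P s (\<sigma> s) u * (rew s * 1 + gval P rew T \<sigma> n u))"
    proof (rule sum_mono)
      fix u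
      have "rew s * (\<Sum>k<n. hitp P T \<sigma> k u) \<le> rew s * 1"
        using rew psum_hitp_le1[OF mdp st] by (intro mult_left_mono) auto
      moreover have "(\<Sum>k<n. hitr P rew T \<sigma> k u) \<le> gval P rew T \<sigma> n u" by (rule Suc.IH)
      ultimately show "P s (\<sigma> s) u * (rew s * (\<Sum>k<n. hitp P T \<sigma> k u) + (\<Sum>k<n. hitr P rew T \<sigma> k u))
          \<le> P s (\<sigma> s) u * (rew s * 1 + gval P rew T \<sigma> n u)"
        by (intro mult_left_mono[OF add_mono] P_nonneg[OF mdp])
    qed
    also have "\<dots> = gval P rew T \<sigma> (Suc n) s"
      using False P_sum1[OF st, of s] by (simp add: sum.distrib sum_distrib_left[symmetric] algebra_simps)
    finally show ?thesis .
  qed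
qed

lemma mono_F:
  assumes mdp: "is_mdp P"
  shows "mono (Emax_tilde_op P rew T)"
proof (rule monoI, rule le_funI)
  fix x y :: "'a \<Rightarrow> ennreal" and s
  assume xy: "x \<le> y"
  have ne: "Act P s \<noteq> {}" using mdp by (simp add: is_mdp_def)
  have "Max ((\<lambda>a. \<Sum>s'\<in>Post P s a. ennreal (P s a s') * x s') ` Act P s)
      \<le> Max ((\<lambda>a. \<Sum>s'\<in>Post P s a. ennreal (P s a s') * y s') ` Act P s)"
  proof (subst Max_le_iff, simp_all add: ne, intro ballI)
    fix a assume a: "a \<in> Act P s"
    have "(\<Sum>s'\<in>Post P s a. ennreal (P s a s') * x s') \<le> (\<Sum>s'\<in>Post P s a. ennreal (P s a s') * y s')"
      using xy by (intro sum_mono mult_left_mono) (auto simp: le_fun_def)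
    also have "\<dots> \<le> Max ((\<lambda>a. \<Sum>s'\<in>Post P s a. ennreal (P s a s') * y s') ` Act P s)"
      using a by (intro Max_ge) auto
    finally show "(\<Sum>s'\<in>Post P s a. ennreal (P s a s') * x s') \<le> Max ((\<lambda>a. \<Sum>s'\<in>Post P s a. ennreal (P s a s') * y s') ` Act P s)" .
  qed
  then show "Emax_tilde_op P rew T x s \<le> Emax_tilde_op P rew T y s"
    unfolding Emax_tilde_op_def Emax_op_def by (auto intro: add_left_mono)
qed


lemma part2:
  assumes mdp: "is_mdp P" and rew: "\<forall>s. 0 \<le> rew s" and st: "\<sigma> \<in> strategies P"
    and pre: "Emax_tilde_op P rew T L \<le> L"
  shows "exp_rew P rew \<sigma> T s \<le> L s"
proof -
  have preS: "Emax_tilde_op P rew T L t \<le> L t" for t using pre by (rule le_funD)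
  have topS0: "L t = top" if "\<not> 0 < min_reach_prob P T t" for t
    using preS[of t] that by (simp add: Emax_tilde_op_def top_unique)
  have act: "\<sigma> t \<in> Act P t" for t using st by (simp add: strategies_def)
  have stepge: "ennreal (rew t) + (\<Sum>u\<in>UNIV. ennreal (P t (\<sigma> t) u) * L u) \<le> L t"
    if "t \<notin> T" "0 < min_reach_prob P T t" for t
    using Emax_ge[OF mdp that(1) act, of rew L] preS[of t] that(2)
    by (simp add: Emax_tilde_op_def)
  define U where "U = {t. L t < top}"
  have Upos: "0 < min_reach_prob P T t" if "t \<in> U" for t
  proof (rule ccontr)
    assume "\<not> 0 < min_reach_prob P T t"
    then have "L t = top" by (rule topS0)
    then show False using that by (simp add: U_def)
  qed
  have closed: "\<forall>t\<in>U. t \<notin> T \<longrightarrow> (\<forall>u. 0 < P t (\<sigma> t) u \<longrightarrow> u \<in> U)"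
  proof (intro ballI impI allI)
    fix t u assume t: "t \<in> U" "t \<notin> T" and p: "0 < P t (\<sigma> t) u"
    have "ennreal (P t (\<sigma> t) u) * L u \<le> (\<Sum>u\<in>UNIV. ennreal (P t (\<sigma> t) u) * L u)"
      by (rule member_le_sum) auto
    also have "\<dots> \<le> L t" using stepge[OF t(2) Upos[OF t(1)]] by (metis add.commute le_iff_add order_trans)
    also have "\<dots> < top" using t by (simp add: U_def)
    finally have "ennreal (P t (\<sigma> t) u) * L u < top" .
    then show "u \<in> U" using p by (auto simp: U_def ennreal_mult_less_top top.not_eq_extremum)
  qed
  have rp1: "\<forall>t\<in>U. rp P T \<sigma> t = 1"
    using Upos min_pos[OF mdp] st by (intro reach_one[OF mdp st closed]) auto
  have gle: "ennreal (gval P rew T \<sigma> n t) \<le> L t" for n t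
  proof (induction n arbitrary: t)
    case 0 then show ?case by simp
  next
    case (Suc n)
    show ?case
    proof (cases "t \<in> T")
      case True then show ?thesis by simp
    next
      case False
      show ?thesis
      proof (cases "0 < min_reach_prob P T t")
        case False then show ?thesis using topS0 by simp
      next
        case pos: True
        have "ennreal (gval P rew T \<sigma> (Suc n) t)
            = ennreal (rew t) + (\<Sum>u\<in>UNIV. ennreal (P t (\<sigma> t) u) * ennreal (gval P rew T \<sigma> n u))"
          using False ennreal_step[OF mdp, of "rew t" "gval P rew T \<sigma> n" t "\<sigma> t"] rew gval_nonneg[OF mdp rew]
          by simp
        also have "\<dots> \<le> ennreal (rew t) + (\<Sum>u\<in>UNIV. ennreal (P t (\<sigma> t) u) * L u)"
          by (intro add_left_mono sum_mono mult_left_mono Suc.IH) auto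
        also have "\<dots> \<le> L t" by (rule stepge[OF False pos])
        finally show ?thesis .
      qed
    qed
  qed
  show ?thesis
  proof (cases "s \<in> U")
    case False then have "L s = top" unfolding U_def by (metis mem_Collect_eq less_top)
    then show ?thesis by simp
  next
    case True
    have "exp_rew P rew \<sigma> T s = (\<Sum>n. ennreal (hitr P rew T \<sigma> n s))"
      using rp1 True by (intro exp_H[OF mdp st rew]) auto
    also have "\<dots> = (SUP n. \<Sum>k<n. ennreal (hitr P rew T \<sigma> k s))" by (rule suminf_eq_SUP)
    also have "\<dots> \<le> L s"
    proof (rule SUP_least)
      fix n
      have "(\<Sum>k<n. ennreal (hitr P rew T \<sigma> k s)) = ennreal (\<Sum>k<n. hitr P rew T \<sigma> k s)"
        by (rule sum_ennreal) (simp add: hitr_nonneg[OF mdp rew])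
      also have "\<dots> \<le> ennreal (gval P rew T \<sigma> n s)"
        by (rule ennreal_leI, rule psum_hitr_le_gval[OF mdp st rew])
      also have "\<dots> \<le> L s" by (rule gle)
      finally show "(\<Sum>k<n. ennreal (hitr P rew T \<sigma> k s)) \<le> L s" .
    qed
    finally show ?thesis .
  qed
qed


fun Amax :: "('s::finite \<Rightarrow> 'a::finite \<Rightarrow> 's \<Rightarrow> real) \<Rightarrow> 's set \<Rightarrow> nat \<Rightarrow> 's \<Rightarrow> real" where
  "Amax P T 0 s = 1"
| "Amax P T (Suc n) s = (if s \<in> T then 0 else Max ((\<lambda>a. \<Sum>u\<in>UNIV. P s a u * Amax P T n u) ` Act P s))"

lemma Act_ne: "is_mdp P \<Longrightarrow> Act P s \<noteq> {}"
  by (simp add: is_mdp_def)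

lemma Amax_bounds:
  assumes mdp: "is_mdp P"
  shows "0 \<le> Amax P T n s \<and> Amax P T n s \<le> 1"
proof (induction n arbitrary: s)
  case 0 then show ?case by simp
next
  case (Suc n)
  show ?case
  proof (cases "s \<in> T")
    case True then show ?thesis by simp
  next
    case False
    have ne: "Act P s \<noteq> {}" by (rule Act_ne[OF mdp])
    obtain a where a: "a \<in> Act P s" using ne by blast
    have lo: "0 \<le> (\<Sum>u\<in>UNIV. P s a u * Amax P T n u)"
      using Suc P_nonneg[OF mdp] by (intro sum_nonneg mult_nonneg_nonneg) auto
    have hi: "(\<Sum>u\<in>UNIV. P s b u * Amax P T n u) \<le> 1" if "b \<in> Act P s" for b
    proof -
      have "(\<Sum>u\<in>UNIV. P s b u * Amax P T n u) \<le> (\<Sum>u\<in>UNIV. P s b u * 1)"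
        using Suc P_nonneg[OF mdp] by (intro sum_mono mult_left_mono) auto
      then show ?thesis using Act_sum1[OF that] by simp
    qed
    have "0 \<le> Max ((\<lambda>a. \<Sum>u\<in>UNIV. P s a u * Amax P T n u) ` Act P s)"
      using lo a by (intro order_trans[OF lo] Max_ge) auto
    moreover have "Max ((\<lambda>a. \<Sum>u\<in>UNIV. P s a u * Amax P T n u) ` Act P s) \<le> 1"
      using hi ne by (subst Max_le_iff) auto
    ultimately show ?thesis using False by simp
  qed
qed

lemma Max_img_mono:
  assumes "finite A" "A \<noteq> {}" "\<And>a. a \<in> A \<Longrightarrow> f a \<le> (g a::'b::linorder)"
  shows "Max (f ` A) \<le> Max (g ` A)"
proof (rule Max.boundedI)
  show "finite (f ` A)" "f ` A \<noteq> {}" using assms by auto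
  fix x assume "x \<in> f ` A"
  then obtain a where a: "a \<in> A" "x = f a" by auto
  have "g a \<le> Max (g ` A)" using a assms by (intro Max_ge) auto
  then show "x \<le> Max (g ` A)" using a assms(3)[of a] by simp
qed

lemma Amax_Suc_le:
  assumes mdp: "is_mdp P"
  shows "Amax P T (Suc n) s \<le> Amax P T n s"
proof (induction n arbitrary: s)
  case 0 then show ?case using Amax_bounds[OF mdp, of T "Suc 0" s] by simp
next
  case (Suc n)
  show ?case
  proof (cases "s \<in> T")
    case True then show ?thesis by simp
  next
    case False
    have ne: "Act P s \<noteq> {}" by (rule Act_ne[OF mdp])
    have "Max ((\<lambda>a. \<Sum>u\<in>UNIV. P s a u * Amax P T (Suc n) u) ` Act P s)
        \<le> Max ((\<lambda>a. \<Sum>u\<in>UNIV. P s a u * Amax P T n u) ` Act P s)"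
      using ne P_nonneg[OF mdp] Suc by (intro Max_img_mono sum_mono mult_left_mono) auto
    then show ?thesis using False by simp
  qed
qed

lemma Amax_small:
  assumes mdp: "is_mdp P"
    and closed: "\<And>t a u. t \<in> U \<Longrightarrow> t \<notin> T \<Longrightarrow> a \<in> Act P t \<Longrightarrow> 0 < P t a u \<Longrightarrow> u \<in> U"
    and one: "\<And>\<sigma> t. \<sigma> \<in> strategies P \<Longrightarrow> t \<in> U \<Longrightarrow> rp P T \<sigma> t = 1"
  shows "\<exists>N. \<forall>t\<in>U. Amax P T N t \<le> 1/2"
proof -
  define Ainf where "Ainf t = (INF n. Amax P T n t)" for t
  have dec: "antimono (\<lambda>n. Amax P T n t)" for t
    using Amax_Suc_le[OF mdp] by (intro antimonoI) (rule decseq_SucI[unfolded decseq_def, rule_format], auto)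
  have bdd: "bdd_below (range (\<lambda>n. Amax P T n t))" for t
    using Amax_bounds[OF mdp] by (intro bdd_belowI[of _ 0]) auto
  have lim: "(\<lambda>n. Amax P T n t) \<longlonglongrightarrow> Ainf t" for t
    unfolding Ainf_def by (rule LIMSEQ_decseq_INF[OF bdd dec])
  have Ainf_le: "Ainf t \<le> Amax P T n t" for n t
    unfolding Ainf_def by (rule cINF_lower[OF bdd]) simp
  have key: "\<exists>a\<in>Act P t. Ainf t \<le> (\<Sum>u\<in>UNIV. P t a u * Ainf u)" if t: "t \<notin> T" for t
  proof (rule ccontr)
    assume "\<not> ?thesis"
    then have lt: "\<forall>a\<in>Act P t. (\<Sum>u\<in>UNIV. P t a u * Ainf u) < Ainf t" by auto
    have "\<forall>a\<in>Act P t. \<forall>\<^sub>F n in sequentially. (\<Sum>u\<in>UNIV. P t a u * Amax P T n u) < Ainf t"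
    proof
      fix a assume a: "a \<in> Act P t"
      have "(\<lambda>n. \<Sum>u\<in>UNIV. P t a u * Amax P T n u) \<longlonglongrightarrow> (\<Sum>u\<in>UNIV. P t a u * Ainf u)"
        by (intro tendsto_sum tendsto_mult_left lim)
      then show "\<forall>\<^sub>F n in sequentially. (\<Sum>u\<in>UNIV. P t a u * Amax P T n u) < Ainf t"
        using lt a by (auto dest: order_tendstoD(2))
    qed
    then have "\<forall>\<^sub>F n in sequentially. \<forall>a\<in>Act P t. (\<Sum>u\<in>UNIV. P t a u * Amax P T n u) < Ainf t"
      by (intro eventually_ball_finite) auto
    then obtain n where n: "\<forall>a\<in>Act P t. (\<Sum>u\<in>UNIV. P t a u * Amax P T n u) < Ainf t"
      unfolding eventually_sequentially by blast
    have "Amax P T (Suc n) t < Ainf t"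
      using n t Act_ne[OF mdp, of t] by (simp add: Max_less_iff)
    then show False using Ainf_le[of t "Suc n"] by simp
  qed
  define \<sigma> where "\<sigma> t = (SOME a. a \<in> Act P t \<and> (t \<notin> T \<longrightarrow> Ainf t \<le> (\<Sum>u\<in>UNIV. P t a u * Ainf u)))" for t
  have \<sigma>: "\<sigma> t \<in> Act P t \<and> (t \<notin> T \<longrightarrow> Ainf t \<le> (\<Sum>u\<in>UNIV. P t (\<sigma> t) u * Ainf u))" for t
  proof (cases "t \<in> T")
    case True
    then show ?thesis unfolding \<sigma>_def using Act_ne[OF mdp, of t] by (auto intro: someI_ex)
  next
    case False
    then have ex: "\<exists>a. a \<in> Act P t \<and> (t \<notin> T \<longrightarrow> Ainf t \<le> (\<Sum>u\<in>UNIV. P t a u * Ainf u))"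
      using key[OF False] by blast
    show ?thesis unfolding \<sigma>_def by (rule someI_ex[OF ex])
  qed
  have st: "\<sigma> \<in> strategies P" using \<sigma> by (simp add: strategies_def)
  have Ainf_av: "Ainf t \<le> avoid P T \<sigma> n t" for n t
  proof (induction n arbitrary: t)
    case 0 then show ?case using Ainf_le[of t 0] by simp
  next
    case (Suc n)
    show ?case
    proof (cases "t \<in> T")
      case True then show ?thesis using Ainf_le[of t "Suc 0"] by simp
    next
      case False
      have "Ainf t \<le> (\<Sum>u\<in>UNIV. P t (\<sigma> t) u * Ainf u)" using \<sigma> False by blast
      also have "\<dots> \<le> (\<Sum>u\<in>UNIV. P t (\<sigma> t) u * avoid P T \<sigma> n u)"
        using Suc P_nonneg[OF mdp] by (intro sum_mono mult_left_mono) auto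
      finally show ?thesis using False by simp
    qed
  qed
  have "\<forall>t\<in>U. \<forall>\<^sub>F n in sequentially. Amax P T n t < 1/2"
  proof
    fix t assume t: "t \<in> U"
    have "(\<lambda>n. avoid P T \<sigma> n t) \<longlonglongrightarrow> 0"
      using avoid_tendsto[OF mdp st, of T t] one[OF st t] by simp
    then have "Ainf t \<le> 0"
      using Ainf_av by (intro LIMSEQ_le_const) auto
    then show "\<forall>\<^sub>F n in sequentially. Amax P T n t < 1/2"
      using lim[of t] by (intro order_tendstoD(2)) auto
  qed
  then have "\<forall>\<^sub>F n in sequentially. \<forall>t\<in>U. Amax P T n t < 1/2"
    by (intro eventually_ball_finite) auto
  then obtain N where "\<forall>t\<in>U. Amax P T N t < 1/2"
    unfolding eventually_sequentially by blast
  then show ?thesis by (meson less_imp_le)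
qed


lemma H_unfold:
  assumes mdp: "is_mdp P" and st: "\<sigma> \<in> strategies P" and rew: "\<forall>s. 0 \<le> rew s" and t: "t \<notin> T"
  shows "(\<Sum>n. ennreal (hitr P rew T \<sigma> n t)) = (\<Sum>u\<in>UNIV. ennreal (P t (\<sigma> t) u) *
            (ennreal (rew t) * ennreal (rp P T \<sigma> u) + (\<Sum>n. ennreal (hitr P rew T \<sigma> n u))))"
proof -
  have hp: "(\<Sum>n. ennreal (hitp P T \<sigma> n u)) = ennreal (rp P T \<sigma> u)" for u
    unfolding rp_def by (rule suminf_ennreal2) (auto simp: hitp_nonneg[OF mdp] summable_hitp[OF mdp st])
  have step: "ennreal (hitr P rew T \<sigma> (Suc n) t) = (\<Sum>u\<in>UNIV. ennreal (P t (\<sigma> t) u) *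
      (ennreal (rew t) * ennreal (hitp P T \<sigma> n u) + ennreal (hitr P rew T \<sigma> n u)))" for n
  proof -
    have "ennreal (hitr P rew T \<sigma> (Suc n) t) = (\<Sum>u\<in>UNIV. ennreal (P t (\<sigma> t) u * (rew t * hitp P T \<sigma> n u + hitr P rew T \<sigma> n u)))"
      unfolding hitr_Suc using t
      by (simp, intro sum_ennreal[symmetric] mult_nonneg_nonneg add_nonneg_nonneg)
         (auto simp: P_nonneg[OF mdp] rew hitp_nonneg[OF mdp] hitr_nonneg[OF mdp rew])
    also have "\<dots> = (\<Sum>u\<in>UNIV. ennreal (P t (\<sigma> t) u) *
      (ennreal (rew t) * ennreal (hitp P T \<sigma> n u) + ennreal (hitr P rew T \<sigma> n u)))"
      by (intro sum.cong refl)
        (simp add: ennreal_mult ennreal_plus P_nonneg[OF mdp] rew hitp_nonneg[OF mdp] hitr_nonneg[OF mdp rew]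
          mult_nonneg_nonneg add_nonneg_nonneg)
    finally show ?thesis .
  qed
  have "(\<Sum>n. ennreal (hitr P rew T \<sigma> n t)) = (\<Sum>n. ennreal (hitr P rew T \<sigma> (n + 1) t)) + (\<Sum>j<1. ennreal (hitr P rew T \<sigma> j t))"
    by (rule suminf_offset) (rule summableI)
  also have "\<dots> = (\<Sum>n. ennreal (hitr P rew T \<sigma> (Suc n) t))" by (simp add: hitr_0)
  also have "\<dots> = (\<Sum>n. \<Sum>u\<in>UNIV. ennreal (P t (\<sigma> t) u) *
      (ennreal (rew t) * ennreal (hitp P T \<sigma> n u) + ennreal (hitr P rew T \<sigma> n u)))"
    by (simp only: step)
  also have "\<dots> = (\<Sum>u\<in>UNIV. \<Sum>n. ennreal (P t (\<sigma> t) u) *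
      (ennreal (rew t) * ennreal (hitp P T \<sigma> n u) + ennreal (hitr P rew T \<sigma> n u)))"
    by (rule suminf_sum) (rule summableI)
  also have "\<dots> = (\<Sum>u\<in>UNIV. ennreal (P t (\<sigma> t) u) *
            (ennreal (rew t) * ennreal (rp P T \<sigma> u) + (\<Sum>n. ennreal (hitr P rew T \<sigma> n u))))"
  proof (intro sum.cong refl)
    fix u
    have "(\<Sum>n. ennreal (P t (\<sigma> t) u) * (ennreal (rew t) * ennreal (hitp P T \<sigma> n u) + ennreal (hitr P rew T \<sigma> n u)))
        = ennreal (P t (\<sigma> t) u) * (\<Sum>n. ennreal (rew t) * ennreal (hitp P T \<sigma> n u) + ennreal (hitr P rew T \<sigma> n u))"
      by (rule ennreal_suminf_cmult)
    also have "(\<Sum>n. ennreal (rew t) * ennreal (hitp P T \<sigma> n u) + ennreal (hitr P rew T \<sigma> n u))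
        = (\<Sum>n. ennreal (rew t) * ennreal (hitp P T \<sigma> n u)) + (\<Sum>n. ennreal (hitr P rew T \<sigma> n u))"
      by (rule suminf_add[symmetric]) (rule summableI)+
    also have "(\<Sum>n. ennreal (rew t) * ennreal (hitp P T \<sigma> n u)) = ennreal (rew t) * ennreal (rp P T \<sigma> u)"
      by (simp add: hp)
    finally show "(\<Sum>n. ennreal (P t (\<sigma> t) u) * (ennreal (rew t) * ennreal (hitp P T \<sigma> n u) + ennreal (hitr P rew T \<sigma> n u)))
        = ennreal (P t (\<sigma> t) u) * (ennreal (rew t) * ennreal (rp P T \<sigma> u) + (\<Sum>n. ennreal (hitr P rew T \<sigma> n u)))" .
  qed
  finally show ?thesis .
qed

lemma ennreal_dist:
  assumes mdp: "is_mdp P" and st: "\<sigma> \<in> strategies P"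
  shows "c + (\<Sum>u\<in>UNIV. ennreal (P t (\<sigma> t) u) * x u) = (\<Sum>u\<in>UNIV. ennreal (P t (\<sigma> t) u) * (c + x u))"
proof -
  have "(\<Sum>u\<in>UNIV. ennreal (P t (\<sigma> t) u)) = 1"
    using P_sum1[OF st, of t] P_nonneg[OF mdp] by (subst sum_ennreal) auto
  then have "(\<Sum>u\<in>UNIV. ennreal (P t (\<sigma> t) u) * c) = c"
    by (simp add: sum_distrib_right[symmetric])
  then show ?thesis by (simp add: distrib_left sum.distrib)
qed


fun Dset :: "('s::finite \<Rightarrow> 'a::finite \<Rightarrow> 's \<Rightarrow> real) \<Rightarrow> 's set \<Rightarrow> 's set \<Rightarrow> nat \<Rightarrow> 's set" where
  "Dset P T S 0 = S"
| "Dset P T S (Suc n) = Dset P T S n \<union> {s. s \<notin> T \<and> (\<exists>a\<in>Act P s. \<exists>t\<in>Dset P T S n. 0 < P s a t)}"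

lemma Dset_mono: "n \<le> m \<Longrightarrow> Dset P T S n \<subseteq> Dset P T S m"
  by (rule lift_Suc_mono_le[of "Dset P T S"]) auto

lemma part1:
  assumes mdp: "is_mdp P" and rew: "\<forall>s. 0 \<le> rew s"
  shows "\<exists>\<sigma>\<in>strategies P. lfp (Emax_tilde_op P rew T) s \<le> exp_rew P rew \<sigma> T s"
proof -
  define F where "F = Emax_tilde_op P rew T"
  define L where "L = lfp F"
  have Lfix: "F L = L" unfolding L_def F_def by (rule lfp_fixpoint[OF mono_F[OF mdp]])
  have LF: "L t = Emax_tilde_op P rew T L t" for t using fun_cong[OF Lfix, of t] unfolding F_def by simp
  define S0 where "S0 = {t. \<not> 0 < min_reach_prob P T t}"
  have S0_iff: "t \<in> S0 \<longleftrightarrow> (\<exists>\<sigma>\<in>strategies P. rp P T \<sigma> t = 0)" for t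
  proof
    assume "t \<in> S0"
    then have "\<not> 0 < min_reach_prob P T t" by (simp add: S0_def)
    then have "\<not> (\<forall>\<sigma>\<in>strategies P. 0 < rp P T \<sigma> t)" using min_pos[OF mdp, of T t] by simp
    then obtain \<sigma> where "\<sigma> \<in> strategies P" "\<not> 0 < rp P T \<sigma> t" by blast
    then have "rp P T \<sigma> t = 0" using rp_nonneg[OF mdp, of \<sigma> T t] by linarith
    then show "\<exists>\<sigma>\<in>strategies P. rp P T \<sigma> t = 0" using \<open>\<sigma> \<in> strategies P\<close> by blast
  next
    assume "\<exists>\<sigma>\<in>strategies P. rp P T \<sigma> t = 0"
    then obtain \<sigma> where "\<sigma> \<in> strategies P" "rp P T \<sigma> t = 0" by blast
    then have "\<not> (\<forall>\<sigma>\<in>strategies P. 0 < rp P T \<sigma> t)" by force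
    then have "\<not> 0 < min_reach_prob P T t" using min_pos[OF mdp, of T t] by simp
    then show "t \<in> S0" by (simp add: S0_def)
  qed
  have S0T: "t \<notin> T" if t0: "t \<in> S0" for t
  proof
    assume tT: "t \<in> T"
    obtain \<sigma> where "\<sigma> \<in> strategies P" "rp P T \<sigma> t = 0" using S0_iff[THEN iffD1, OF t0] by blast
    then show False using rp_T[OF mdp _ tT, of \<sigma>] by simp
  qed
  define \<sigma>0 where "\<sigma>0 t = (SOME \<sigma>. \<sigma> \<in> strategies P \<and> rp P T \<sigma> t = 0) t" for t
  have \<sigma>0: "\<sigma>0 t \<in> Act P t \<and> (\<forall>u. P t (\<sigma>0 t) u \<noteq> 0 \<longrightarrow> u \<in> S0)" if t: "t \<in> S0" for t
  proof -
    define \<tau> where "\<tau> = (SOME \<sigma>. \<sigma> \<in> strategies P \<and> rp P T \<sigma> t = 0)"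
    have ex: "\<exists>\<sigma>. \<sigma> \<in> strategies P \<and> rp P T \<sigma> t = 0" using S0_iff[THEN iffD1, OF t] by blast
    have \<tau>: "\<tau> \<in> strategies P \<and> rp P T \<tau> t = 0"
      unfolding \<tau>_def by (rule someI_ex[OF ex])
    then have \<tau>st: "\<tau> \<in> strategies P" and \<tau>0: "rp P T \<tau> t = 0" by auto
    have eq: "\<sigma>0 t = \<tau> t" unfolding \<sigma>0_def \<tau>_def ..
    have "(\<Sum>u\<in>UNIV. P t (\<tau> t) u * rp P T \<tau> u) = rp P T \<tau> t"
      by (rule rp_notT[OF mdp \<tau>st S0T[OF t], symmetric])
    then have "(\<Sum>u\<in>UNIV. P t (\<tau> t) u * rp P T \<tau> u) = 0" by (simp only: \<tau>0)
    then have z: "\<forall>u\<in>UNIV. P t (\<tau> t) u * rp P T \<tau> u = 0"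
      by (rule sum_nonneg_eq_0_iff[THEN iffD1, rotated 2])
         (auto intro: mult_nonneg_nonneg[OF P_nonneg[OF mdp] rp_nonneg[OF mdp \<tau>st]])
    have cl: "\<forall>u. P t (\<tau> t) u \<noteq> 0 \<longrightarrow> u \<in> S0"
    proof (intro allI impI)
      fix u assume "P t (\<tau> t) u \<noteq> 0"
      then have "rp P T \<tau> u = 0" using z[rule_format, OF UNIV_I, of u] by simp
      then show "u \<in> S0" using \<tau>st by (intro S0_iff[THEN iffD2]) blast
    qed
    have "\<tau> t \<in> Act P t" using \<tau>st by (simp add: strategies_def)
    then show ?thesis using eq cl by simp
  qed
  define D where "D = (\<Union>n. Dset P T S0 n)"
  define lst where "lst t = (LEAST n. t \<in> Dset P T S0 n)" for t
  define att where "att t = (SOME a. a \<in> Act P t \<and> (\<exists>u\<in>Dset P T S0 (lst t - 1). 0 < P t a u))" for t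
  have att: "t \<notin> T \<and> lst t \<noteq> 0 \<and> att t \<in> Act P t \<and> (\<exists>u\<in>Dset P T S0 (lst t - 1). 0 < P t (att t) u)"
    if t: "t \<in> D" "t \<notin> S0" for t
  proof -
    obtain n where n: "t \<in> Dset P T S0 n" using t unfolding D_def by blast
    have in_l: "t \<in> Dset P T S0 (lst t)" unfolding lst_def by (rule LeastI[of _ n]) (rule n)
    have l0: "lst t \<noteq> 0"
    proof
      assume "lst t = 0"
      then show False using in_l t(2) by simp
    qed
    then obtain m where m: "lst t = Suc m" by (cases "lst t") auto
    have "t \<notin> Dset P T S0 m"
      unfolding lst_def by (rule not_less_Least) (use m lst_def in simp)
    then have "t \<notin> T \<and> (\<exists>a\<in>Act P t. \<exists>u\<in>Dset P T S0 m. 0 < P t a u)" using in_l m by simp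
    moreover have "lst t - 1 = m" using m by simp
    ultimately have ex: "\<exists>a. a \<in> Act P t \<and> (\<exists>u\<in>Dset P T S0 (lst t - 1). 0 < P t a u)" and tT: "t \<notin> T" by auto
    have "att t \<in> Act P t \<and> (\<exists>u\<in>Dset P T S0 (lst t - 1). 0 < P t (att t) u)"
      unfolding att_def by (rule someI_ex[OF ex])
    then show ?thesis using tT l0 by simp
  qed
  define gL where "gL t = (SOME a. a \<in> Act P t \<and> (\<Sum>u\<in>Post P t a. ennreal (P t a u) * L u)
       = Max ((\<lambda>a. \<Sum>u\<in>Post P t a. ennreal (P t a u) * L u) ` Act P t))" for t
  have gL: "gL t \<in> Act P t \<and> (\<Sum>u\<in>Post P t (gL t). ennreal (P t (gL t) u) * L u)
       = Max ((\<lambda>a. \<Sum>u\<in>Post P t a. ennreal (P t a u) * L u) ` Act P t)" for t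
  proof -
    have "Max ((\<lambda>a. \<Sum>u\<in>Post P t a. ennreal (P t a u) * L u) ` Act P t) \<in> (\<lambda>a. \<Sum>u\<in>Post P t a. ennreal (P t a u) * L u) ` Act P t"
      using Act_ne[OF mdp, of t] by (intro Max_in) auto
    then have ex: "\<exists>a. a \<in> Act P t \<and> (\<Sum>u\<in>Post P t a. ennreal (P t a u) * L u)
       = Max ((\<lambda>a. \<Sum>u\<in>Post P t a. ennreal (P t a u) * L u) ` Act P t)" by force
    show ?thesis unfolding gL_def by (rule someI_ex[OF ex])
  qed
  define \<sigma>s where "\<sigma>s t = (if t \<in> S0 then \<sigma>0 t else if t \<in> D then att t else gL t)" for t
  have "\<sigma>s t \<in> Act P t" for t
  proof (cases "t \<in> S0")
    case True then show ?thesis using \<sigma>0[OF True] by (simp add: \<sigma>s_def)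
  next
    case nS0: False
    show ?thesis
    proof (cases "t \<in> D")
      case True then show ?thesis using att[OF True nS0] nS0 by (simp add: \<sigma>s_def)
    next
      case False then show ?thesis using gL[of t] nS0 by (simp add: \<sigma>s_def)
    qed
  qed
  then have st: "\<sigma>s \<in> strategies P" by (simp add: strategies_def)
  have S0_zero: "\<forall>t\<in>S0. rp P T \<sigma>s t = 0"
  proof (rule reach_zero)
    show "S0 \<inter> T = {}" using S0T by blast
    show "\<forall>t\<in>S0. \<forall>u. P t (\<sigma>s t) u \<noteq> 0 \<longrightarrow> u \<in> S0" using \<sigma>0 by (simp add: \<sigma>s_def)
  qed
  have Dlt: "\<forall>s\<in>Dset P T S0 n. rp P T \<sigma>s s < 1" for n
  proof (induction n)
    case 0 then show ?case using S0_zero by simp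
  next
    case (Suc n)
    show ?case
    proof
      fix s assume s: "s \<in> Dset P T S0 (Suc n)"
      show "rp P T \<sigma>s s < 1"
      proof (cases "s \<in> Dset P T S0 n")
        case True then show ?thesis using Suc by blast
      next
        case False
        have nS0: "s \<notin> S0" using False Dset_mono[of 0 n P T S0] by auto
        have sD: "s \<in> D" using s unfolding D_def by blast
        from att[OF sD nS0] obtain u where
          sT: "s \<notin> T" and l0: "lst s \<noteq> 0" and u: "u \<in> Dset P T S0 (lst s - 1)" "0 < P s (att s) u" by blast
        have "lst s \<le> Suc n" unfolding lst_def by (rule Least_le) (rule s)
        then have "lst s - 1 \<le> n" by simp
        then have "u \<in> Dset P T S0 n" using u(1) Dset_mono[of "lst s - 1" n P T S0] by blast
        then have "rp P T \<sigma>s u < 1" using Suc by blast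
        moreover have "\<sigma>s s = att s" using nS0 sD by (simp add: \<sigma>s_def)
        ultimately show ?thesis using reach_lt1[OF mdp st sT] u(2) by simp
      qed
    qed
  qed
  define R where "R = - D"
  have R_nS0: "t \<notin> S0" if "t \<in> R" for t
  proof
    assume "t \<in> S0"
    then have "t \<in> Dset P T S0 0" by simp
    then show False using that unfolding R_def D_def by blast
  qed
  have R_closed: "u \<in> R" if "t \<in> R" "t \<notin> T" "a \<in> Act P t" "0 < P t a u" for t a u
  proof (rule ccontr)
    assume "u \<notin> R"
    then obtain n where "u \<in> Dset P T S0 n" unfolding R_def D_def by blast
    then have "t \<in> Dset P T S0 (Suc n)" using that by auto
    then show False using that(1) unfolding R_def D_def by blast
  qed
  have R_one: "rp P T \<sigma> t = 1" if "\<sigma> \<in> strategies P" "t \<in> R" for \<sigma> t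
  proof -
    have "\<forall>t\<in>R. rp P T \<sigma> t = 1"
    proof (rule reach_one[OF mdp that(1)])
      show "\<forall>t\<in>R. t \<notin> T \<longrightarrow> (\<forall>u. 0 < P t (\<sigma> t) u \<longrightarrow> u \<in> R)"
        using R_closed that(1) by (auto simp: strategies_def)
      show "\<forall>t\<in>R. 0 < rp P T \<sigma> t"
        using R_nS0 min_pos[OF mdp] that(1) unfolding S0_def by blast
    qed
    then show ?thesis using that(2) by blast
  qed
  have \<sigma>sR: "\<sigma>s t = gL t" if "t \<in> R" for t
    using that R_nS0[OF that] unfolding \<sigma>s_def R_def by auto
  obtain N where N: "\<forall>t\<in>R. Amax P T N t \<le> 1/2"
  proof -
    have "\<exists>N. \<forall>t\<in>R. Amax P T N t \<le> 1/2"
    proof (rule Amax_small[OF mdp])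
      fix t a u assume "t \<in> R" "t \<notin> T" "a \<in> Act P t" "0 < P t a u"
      then show "u \<in> R" by (rule R_closed)
    next
      fix \<sigma> t assume "\<sigma> \<in> strategies P" "t \<in> R"
      then show "rp P T \<sigma> t = 1" by (rule R_one)
    qed
    then show ?thesis using that by blast
  qed
  define rmax where "rmax = Max (range rew)"
  have rmax: "rew t \<le> rmax" for t unfolding rmax_def by (rule Max_ge) auto
  have rmax0: "0 \<le> rmax" using rmax[of undefined] rew by (meson order_trans)
  define w where "w t = 2 * rmax * (\<Sum>k<N. Amax P T k t)" for t
  define W where "W t = (if t \<in> R then ennreal (w t) else top)" for t
  have w0: "0 \<le> w t" for t unfolding w_def using rmax0 Amax_bounds[OF mdp]
    by (intro mult_nonneg_nonneg sum_nonneg) auto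
  have FW: "F W \<le> W"
  proof (rule le_funI)
    fix t
    show "F W t \<le> W t"
    proof (cases "t \<in> R")
      case False then show ?thesis by (simp add: W_def)
    next
      case tR: True
      have pos: "0 < min_reach_prob P T t" using R_nS0[OF tR] unfolding S0_def by blast
      show ?thesis
      proof (cases "t \<in> T")
        case True then show ?thesis using pos by (simp add: F_def Emax_tilde_op_def Emax_op_def)
      next
        case tT: False
        have each: "ennreal (rew t) + (\<Sum>u\<in>Post P t a. ennreal (P t a u) * W u) \<le> W t"
          if a: "a \<in> Act P t" for a
        proof -
          have "(\<Sum>u\<in>Post P t a. ennreal (P t a u) * W u) = (\<Sum>u\<in>Post P t a. ennreal (P t a u) * ennreal (w u))"
            using R_closed[OF tR tT a] by (intro sum.cong refl) (auto simp: W_def Post_def)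
          also have "\<dots> = (\<Sum>u\<in>UNIV. ennreal (P t a u) * ennreal (w u))" by (rule Post_sum[OF mdp])
          finally have "ennreal (rew t) + (\<Sum>u\<in>Post P t a. ennreal (P t a u) * W u)
              = ennreal (rew t + (\<Sum>u\<in>UNIV. P t a u * w u))"
            using ennreal_step[OF mdp, of "rew t" w t a] rew w0 by simp
          also have "\<dots> \<le> ennreal (w t)"
          proof (rule ennreal_leI)
            have A: "(\<Sum>u\<in>UNIV. P t a u * Amax P T k u) \<le> Amax P T (Suc k) t" for k
            proof -
              have "(\<Sum>u\<in>UNIV. P t a u * Amax P T k u) \<le> Max ((\<lambda>a. \<Sum>u\<in>UNIV. P t a u * Amax P T k u) ` Act P t)"
                using a by (intro Max_ge) auto
              then show ?thesis using tT by simp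
            qed
            have "(\<Sum>u\<in>UNIV. P t a u * w u) = 2 * rmax * (\<Sum>k<N. \<Sum>u\<in>UNIV. P t a u * Amax P T k u)"
              unfolding w_def by (simp add: sum_distrib_left sum.swap[of _ UNIV] algebra_simps)
            also have "\<dots> \<le> 2 * rmax * (\<Sum>k<N. Amax P T (Suc k) t)"
              using rmax0 A by (intro mult_left_mono sum_mono) auto
            finally have 1: "(\<Sum>u\<in>UNIV. P t a u * w u) \<le> 2 * rmax * (\<Sum>k<N. Amax P T (Suc k) t)" .
            have 2: "(\<Sum>k<N. Amax P T (Suc k) t) + 1 = (\<Sum>k<N. Amax P T k t) + Amax P T N t"
              using sum.lessThan_Suc_shift[of "\<lambda>k. Amax P T k t" N] sum.lessThan_Suc[of "\<lambda>k. Amax P T k t" N]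
              by simp
            have 3: "2 * rmax * Amax P T N t \<le> rmax"
              using N tR rmax0 mult_left_mono[of "Amax P T N t" "1/2" "2 * rmax"] by simp
            have 4: "2 * rmax * ((\<Sum>k<N. Amax P T (Suc k) t) + 1) = 2 * rmax * ((\<Sum>k<N. Amax P T k t) + Amax P T N t)"
              by (simp only: 2)
            have 5: "w t = 2 * rmax * (\<Sum>k<N. Amax P T k t)" by (simp only: w_def)
            show "rew t + (\<Sum>u\<in>UNIV. P t a u * w u) \<le> w t"
              using 1 3 4 5 rmax[of t] unfolding distrib_left by linarith
          qed
          also have "\<dots> = W t" using tR by (simp add: W_def)
          finally show ?thesis .
        qed
        have "F W t = ennreal (rew t) + Max ((\<lambda>a. \<Sum>u\<in>Post P t a. ennreal (P t a u) * W u) ` Act P t)"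
          using pos tT by (simp add: F_def Emax_tilde_op_def Emax_op_def)
        also have "\<dots> \<le> W t"
        proof -
          have "Max ((\<lambda>a. \<Sum>u\<in>Post P t a. ennreal (P t a u) * W u) ` Act P t) \<in> (\<lambda>a. \<Sum>u\<in>Post P t a. ennreal (P t a u) * W u) ` Act P t"
            using Act_ne[OF mdp, of t] by (intro Max_in) auto
          then obtain a where "a \<in> Act P t" "Max ((\<lambda>a. \<Sum>u\<in>Post P t a. ennreal (P t a u) * W u) ` Act P t) = (\<Sum>u\<in>Post P t a. ennreal (P t a u) * W u)"
            by auto
          then show ?thesis using each by simp
        qed
        finally show ?thesis .
      qed
    qed
  qed
  have LW: "L \<le> W" unfolding L_def by (rule lfp_lowerbound[of F W, OF FW])
  define B where "B = 2 * rmax * real N"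
  have B0: "0 \<le> B" unfolding B_def using rmax0 by simp
  have LB: "L t \<le> ennreal B" if "t \<in> R" for t
  proof -
    have "(\<Sum>k<N. Amax P T k t) \<le> real N"
      using sum_bounded_above[of "{..<N}" "\<lambda>k. Amax P T k t" 1] Amax_bounds[OF mdp] by simp
    then have "w t \<le> B" unfolding w_def B_def using rmax0 by (intro mult_left_mono) auto
    then have "W t \<le> ennreal B" using that by (simp add: W_def ennreal_leI)
    moreover have "L t \<le> W t" using LW by (rule le_funD)
    ultimately show ?thesis by (rule order_trans[rotated])
  qed
  have LT: "L t = 0" if "t \<in> R" "t \<in> T" for t
    using LF[of t] R_nS0[OF that(1)] that(2) by (simp add: S0_def Emax_tilde_op_def Emax_op_def)
  have Lstep: "L t = ennreal (rew t) + (\<Sum>u\<in>UNIV. ennreal (P t (\<sigma>s t) u) * L u)" if "t \<in> R" "t \<notin> T" for t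
  proof -
    have "L t = ennreal (rew t) + Max ((\<lambda>a. \<Sum>u\<in>Post P t a. ennreal (P t a u) * L u) ` Act P t)"
      using LF[of t] R_nS0[OF that(1)] that(2) by (simp add: S0_def Emax_tilde_op_def Emax_op_def)
    also have "\<dots> = ennreal (rew t) + (\<Sum>u\<in>Post P t (\<sigma>s t). ennreal (P t (\<sigma>s t) u) * L u)"
      using gL[of t] \<sigma>sR[OF that(1)] by simp
    finally show ?thesis by (simp add: Post_sum[OF mdp])
  qed
  have C1: "\<forall>t\<in>R. L t \<le> ennreal (gval P rew T \<sigma>s n t) + ennreal (B * avoid P T \<sigma>s n t)" for n
  proof (induction n)
    case 0 then show ?case using LB by simp
  next
    case (Suc n)
    show ?case
    proof
      fix t assume tR: "t \<in> R"
      show "L t \<le> ennreal (gval P rew T \<sigma>s (Suc n) t) + ennreal (B * avoid P T \<sigma>s (Suc n) t)"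
      proof (cases "t \<in> T")
        case True then show ?thesis using LT[OF tR] by simp
      next
        case tT: False
        define g where "g u = gval P rew T \<sigma>s n u + B * avoid P T \<sigma>s n u" for u
        have g0: "0 \<le> g u" for u unfolding g_def
          using gval_nonneg[OF mdp rew] avoid_nonneg[OF mdp] B0 by (intro add_nonneg_nonneg mult_nonneg_nonneg) auto
        have "L t = ennreal (rew t) + (\<Sum>u\<in>UNIV. ennreal (P t (\<sigma>s t) u) * L u)" by (rule Lstep[OF tR tT])
        also have "\<dots> \<le> ennreal (rew t) + (\<Sum>u\<in>UNIV. ennreal (P t (\<sigma>s t) u) * ennreal (g u))"
        proof (intro add_left_mono sum_mono)
          fix u
          show "ennreal (P t (\<sigma>s t) u) * L u \<le> ennreal (P t (\<sigma>s t) u) * ennreal (g u)"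
          proof (cases "0 < P t (\<sigma>s t) u")
            case True
            then have "u \<in> R" using R_closed[OF tR tT _ True] st by (simp add: strategies_def)
            then have "L u \<le> ennreal (gval P rew T \<sigma>s n u) + ennreal (B * avoid P T \<sigma>s n u)" using Suc by blast
            also have "\<dots> = ennreal (g u)" unfolding g_def
              using gval_nonneg[OF mdp rew] avoid_nonneg[OF mdp] B0 by (simp add: ennreal_plus mult_nonneg_nonneg)
            finally show ?thesis by (rule mult_left_mono) simp
          next
            case False
            then have "ennreal (P t (\<sigma>s t) u) = 0" by (simp add: ennreal_eq_0_iff)
            then show ?thesis by simp
          qed
        qed
        also have "\<dots> = ennreal (rew t + (\<Sum>u\<in>UNIV. P t (\<sigma>s t) u * g u))"
          using ennreal_step[OF mdp, of "rew t" g t "\<sigma>s t"] rew g0 by simp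
        also have "rew t + (\<Sum>u\<in>UNIV. P t (\<sigma>s t) u * g u)
            = gval P rew T \<sigma>s (Suc n) t + B * avoid P T \<sigma>s (Suc n) t"
          using tT unfolding g_def by (simp add: algebra_simps sum.distrib sum_distrib_left)
        also have "ennreal \<dots> = ennreal (gval P rew T \<sigma>s (Suc n) t) + ennreal (B * avoid P T \<sigma>s (Suc n) t)"
          by (rule ennreal_plus[OF gval_nonneg[OF mdp rew] mult_nonneg_nonneg[OF B0 avoid_nonneg[OF mdp]]])
        finally show ?thesis .
      qed
    qed
  qed
  define Hs where "Hs t = (\<Sum>n. ennreal (hitr P rew T \<sigma>s n t))" for t
  have C2: "\<forall>t\<in>R. ennreal (gval P rew T \<sigma>s n t) \<le> Hs t" for n
  proof (induction n)
    case 0 then show ?case by simp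
  next
    case (Suc n)
    show ?case
    proof
      fix t assume tR: "t \<in> R"
      show "ennreal (gval P rew T \<sigma>s (Suc n) t) \<le> Hs t"
      proof (cases "t \<in> T")
        case True then show ?thesis by simp
      next
        case tT: False
        have "ennreal (gval P rew T \<sigma>s (Suc n) t)
            = ennreal (rew t) + (\<Sum>u\<in>UNIV. ennreal (P t (\<sigma>s t) u) * ennreal (gval P rew T \<sigma>s n u))"
          using tT ennreal_step[OF mdp, of "rew t" "gval P rew T \<sigma>s n" t "\<sigma>s t"] rew gval_nonneg[OF mdp rew]
          by simp
        also have "\<dots> = (\<Sum>u\<in>UNIV. ennreal (P t (\<sigma>s t) u) * (ennreal (rew t) + ennreal (gval P rew T \<sigma>s n u)))"
          by (rule ennreal_dist[OF mdp st])
        also have "\<dots> \<le> (\<Sum>u\<in>UNIV. ennreal (P t (\<sigma>s t) u) * (ennreal (rew t) * ennreal (rp P T \<sigma>s u) + Hs u))"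
        proof (rule sum_mono)
          fix u
          show "ennreal (P t (\<sigma>s t) u) * (ennreal (rew t) + ennreal (gval P rew T \<sigma>s n u))
              \<le> ennreal (P t (\<sigma>s t) u) * (ennreal (rew t) * ennreal (rp P T \<sigma>s u) + Hs u)"
          proof (cases "0 < P t (\<sigma>s t) u")
            case True
            then have uR: "u \<in> R" using R_closed[OF tR tT _ True] st by (simp add: strategies_def)
            then have "ennreal (gval P rew T \<sigma>s n u) \<le> Hs u" using Suc by blast
            moreover have "rp P T \<sigma>s u = 1" by (rule R_one[OF st uR])
            ultimately show ?thesis by (intro mult_left_mono) (auto intro: add_left_mono)
          next
            case False
            then have "ennreal (P t (\<sigma>s t) u) = 0" by (simp add: ennreal_eq_0_iff)
            then show ?thesis by simp
          qed
        qed
        also have "\<dots> = Hs t" unfolding Hs_def by (rule H_unfold[OF mdp st rew tT, symmetric])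
        finally show ?thesis .
      qed
    qed
  qed
  have C3: "L t \<le> Hs t" if tR: "t \<in> R" for t
  proof (rule ennreal_le_epsilon)
    fix e :: real assume e: "0 < e"
    have "(\<lambda>n. B * avoid P T \<sigma>s n t) \<longlonglongrightarrow> B * 0"
      using avoid_tendsto[OF mdp st, of T t] R_one[OF st tR] by (intro tendsto_mult_left) simp
    then have "\<forall>\<^sub>F n in sequentially. B * avoid P T \<sigma>s n t < e" using e by (auto dest: order_tendstoD(2))
    then obtain n where n: "B * avoid P T \<sigma>s n t < e" unfolding eventually_sequentially by blast
    have "L t \<le> ennreal (gval P rew T \<sigma>s n t) + ennreal (B * avoid P T \<sigma>s n t)" using C1 tR by blast
    also have "\<dots> \<le> Hs t + ennreal e"
      using C2 tR n by (intro add_mono ennreal_leI) auto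
    finally show "L t \<le> Hs t + ennreal e" .
  qed
  show ?thesis
  proof (intro bexI[OF _ st])
    show "lfp (Emax_tilde_op P rew T) s \<le> exp_rew P rew \<sigma>s T s"
    proof (cases "s \<in> D")
      case True
      then obtain n where "s \<in> Dset P T S0 n" unfolding D_def by blast
      then have "rp P T \<sigma>s s < 1" using Dlt by blast
      then show ?thesis using exp_top[OF mdp st rew] by simp
    next
      case False
      then have sR: "s \<in> R" by (simp add: R_def)
      have "exp_rew P rew \<sigma>s T s = Hs s" unfolding Hs_def by (rule exp_H[OF mdp st rew R_one[OF st sR]])
      then show ?thesis using C3[OF sR] unfolding L_def F_def by simp
    qed
  qed
qed

theorem lemma7:
  fixes P :: "'s::finite \<Rightarrow> 'a::finite \<Rightarrow> 's \<Rightarrow> real"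
    and T :: "'s set" and rew :: "'s \<Rightarrow> real"
  assumes "is_mdp P"
    and "\<forall>s. rew s \<ge> 0"
  shows "\<forall>s. lfp (Emax_tilde_op P rew T) s = max_exp_rew P rew T s"
proof
  fix s
  have mdp: "is_mdp P" and rew: "\<forall>s. 0 \<le> rew s" using assms by auto
  define L where "L = lfp (Emax_tilde_op P rew T)"
  have Lfix: "Emax_tilde_op P rew T L = L" unfolding L_def by (rule lfp_fixpoint[OF mono_F[OF mdp]])
  have pre: "Emax_tilde_op P rew T L \<le> L" by (simp add: Lfix)
  have fin: "finite ((\<lambda>\<sigma>. exp_rew P rew \<sigma> T s) ` strategies P)" using finite_strategies by simp
  have ne: "(\<lambda>\<sigma>. exp_rew P rew \<sigma> T s) ` strategies P \<noteq> {}" using strategies_ne[OF mdp] by blast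
  obtain \<sigma> where \<sigma>: "\<sigma> \<in> strategies P" "L s \<le> exp_rew P rew \<sigma> T s"
    using part1[OF mdp rew, of T s] unfolding L_def by blast
  have "exp_rew P rew \<sigma> T s \<le> max_exp_rew P rew T s"
    unfolding max_exp_rew_def using fin \<sigma>(1) by (intro Max_ge) auto
  then have le1: "L s \<le> max_exp_rew P rew T s" using \<sigma>(2) by (rule order_trans[rotated])
  have le2: "max_exp_rew P rew T s \<le> L s"
    unfolding max_exp_rew_def
  proof (rule Max.boundedI[OF fin ne])
    fix x assume "x \<in> (\<lambda>\<sigma>. exp_rew P rew \<sigma> T s) ` strategies P"
    then obtain \<tau> where "\<tau> \<in> strategies P" "x = exp_rew P rew \<tau> T s" by blast
    then show "x \<le> L s" using part2[OF mdp rew _ pre] by simp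
  qed
  show "lfp (Emax_tilde_op P rew T) s = max_exp_rew P rew T s"
    using le1 le2 unfolding L_def by (rule antisym)
qed

end
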